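(* Let $q$ be an acyclic Boolean conjunctive query such that each cycle of the attack graph of $q$ is terminal and each atom of $q$ belongs to a cycle of the attack graph. Then: (1) if the same variable $x$ occurs in (atoms of) two distinct cycles of the attack graph, then $x\in\mathit{key}(F)$ for each atom $F$ in these cycles; (2) if $F\to G$ is a weak attack, then $\mathit{key}(G)\subseteq\mathit{vars}(F)$.
   Context: Atoms have variables or constants as arguments; each relation name has a signature $[n,k]$ with primary key positions $1,\dots,k$. $\mathit{key}(F)$ is the set of variables in the primary-key positions of atom $F$, $\mathit{vars}(F)$ its set of variables. A Boolean conjunctive query $q$ is a finite set of atoms; $\mathit{vars}(q)$ its variables. A join tree for $q$ is an undirected tree on the atoms of $q$ such that whenever a variable occurs in atoms $F$ and $G$ it occurs in every atom on the path between them; the edge between $F$ and $G$ is labeled $\mathit{vars}(F)\cap\mathit{vars}(G)$. $q$ is acyclic if it has a join tree. $\mathit{FD}(q)=\{\mathit{key}(F)\to\mathit{vars}(F)\mid F\in q\}$; $F^{+,q}=\{x\in\mathit{vars}(q)\mid \mathit{FD}(q\setminus\{F\})\models\mathit{key}(F)\to x\}$; $F^{\oplus,q}=\{x\in\mathit{vars}(q)\mid \mathit{FD}(q)\models\mathit{key}(F)\to x\}$. The attack graph of $q$, computed from any join tree $\tau$ (independent of the choice), has an edge (attack) $F\to G$ for distinct atoms iff every label $L$ on the path between $F$ and $G$ in $\tau$ satisfies $L\not\subseteq F^{+,q}$. An attack $F\to G$ is weak if $\mathit{key}(G)\subseteq F^{\oplus,q}$. A cycle is a sequence of edges $F_0\to\dots\to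 F_{n-1}\to F_0$ with pairwise distinct $F_i$; it is terminal if there is no edge from a vertex of the cycle to a vertex outside the cycle. *)

theory Defs
  imports Main
begin

datatype ('v, 'c) arg = Var 'v | Cst 'c

text \<open>An atom is a relation name together with its list of arguments.
  A signature assigns to each relation name a pair (n, k): arity n, primary key
  positions 1..k.\<close>
type_synonym ('r, 'v, 'c) atom = "'r \<times> ('v, 'c) arg list"

type_synonym 'r signature = "'r \<Rightarrow> nat \<times> nat"

definition wf_atom :: "'r signature \<Rightarrow> ('r, 'v, 'c) atom \<Rightarrow> bool" where
  "wf_atom sig F \<longleftrightarrow> length (snd F) = fst (sig (fst F))
      \<and> 1 \<le> snd (sig (fst F)) \<and> snd (sig (fst F)) \<le> fst (sig (fst F))"

definition wf_query :: "'r signature \<Rightarrow> ('r, 'v, 'c) atom set \<Rightarrow> bool" where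
  "wf_query sig q \<longleftrightarrow> finite q \<and> (\<forall>F\<in>q. wf_atom sig F)"

definition avars :: "('r, 'v, 'c) atom \<Rightarrow> 'v set" where
  "avars F = {v. Var v \<in> set (snd F)}"

definition akey :: "'r signature \<Rightarrow> ('r, 'v, 'c) atom \<Rightarrow> 'v set" where
  "akey sig F = {v. Var v \<in> set (take (snd (sig (fst F))) (snd F))}"

definition qvars :: "('r, 'v, 'c) atom set \<Rightarrow> 'v set" where
  "qvars q = (\<Union>F\<in>q. avars F)"

definition FD :: "'r signature \<Rightarrow> ('r, 'v, 'c) atom set \<Rightarrow> ('v set \<times> 'v set) set" where
  "FD sig q = {(akey sig F, avars F) | F. F \<in> q}"

inductive_set fd_closure :: "('v set \<times> 'v set) set \<Rightarrow> 'v set \<Rightarrow> 'v set"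
  for \<Sigma> :: "('v set \<times> 'v set) set" and X :: "'v set" where
  base: "x \<in> X \<Longrightarrow> x \<in> fd_closure \<Sigma> X"
| step: "(L, R) \<in> \<Sigma> \<Longrightarrow> (\<forall>z\<in>L. z \<in> fd_closure \<Sigma> X) \<Longrightarrow> y \<in> R \<Longrightarrow> y \<in> fd_closure \<Sigma> X"

definition fd_entails :: "('v set \<times> 'v set) set \<Rightarrow> 'v set \<Rightarrow> 'v \<Rightarrow> bool" where
  "fd_entails \<Sigma> X x \<longleftrightarrow> x \<in> fd_closure \<Sigma> X"

definition Fplus :: "'r signature \<Rightarrow> ('r, 'v, 'c) atom set \<Rightarrow> ('r, 'v, 'c) atom \<Rightarrow> 'v set" where
  "Fplus sig q F = {x \<in> qvars q. fd_entails (FD sig (q - {F})) (akey sig F) x}"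

definition Foplus :: "'r signature \<Rightarrow> ('r, 'v, 'c) atom set \<Rightarrow> ('r, 'v, 'c) atom \<Rightarrow> 'v set" where
  "Foplus sig q F = {x \<in> qvars q. fd_entails (FD sig q) (akey sig F) x}"

definition tree_path :: "('a \<times> 'a) set \<Rightarrow> 'a \<Rightarrow> 'a \<Rightarrow> 'a list \<Rightarrow> bool" where
  "tree_path E F G ps \<longleftrightarrow> ps \<noteq> [] \<and> hd ps = F \<and> last ps = G \<and> distinct ps
      \<and> (\<forall>i. Suc i < length ps \<longrightarrow> (ps ! i, ps ! Suc i) \<in> E)"

definition is_tree :: "'a set \<Rightarrow> ('a \<times> 'a) set \<Rightarrow> bool" where
  "is_tree V E \<longleftrightarrow> E \<subseteq> V \<times> V \<and> sym E \<and> (\<forall>x. (x, x) \<notin> E)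
      \<and> (\<forall>F\<in>V. \<forall>G\<in>V. \<exists>!ps. tree_path E F G ps)"

definition join_tree :: "('r, 'v, 'c) atom set \<Rightarrow> (('r, 'v, 'c) atom \<times> ('r, 'v, 'c) atom) set \<Rightarrow> bool" where
  "join_tree q \<tau> \<longleftrightarrow> is_tree q \<tau>
      \<and> (\<forall>F\<in>q. \<forall>G\<in>q. \<forall>ps. tree_path \<tau> F G ps \<longrightarrow>
            (\<forall>x. x \<in> avars F \<and> x \<in> avars G \<longrightarrow> (\<forall>H\<in>set ps. x \<in> avars H)))"

definition acyclic_query :: "('r, 'v, 'c) atom set \<Rightarrow> bool" where
  "acyclic_query q \<longleftrightarrow> (\<exists>\<tau>. join_tree q \<tau>)"

definition attacks :: "'r signature \<Rightarrow> ('r, 'v, 'c) atom set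
    \<Rightarrow> (('r, 'v, 'c) atom \<times> ('r, 'v, 'c) atom) set
    \<Rightarrow> ('r, 'v, 'c) atom \<Rightarrow> ('r, 'v, 'c) atom \<Rightarrow> bool" where
  "attacks sig q \<tau> F G \<longleftrightarrow> F \<in> q \<and> G \<in> q \<and> F \<noteq> G
      \<and> (\<forall>ps. tree_path \<tau> F G ps \<longrightarrow>
            (\<forall>i. Suc i < length ps \<longrightarrow>
                 \<not> (avars (ps ! i) \<inter> avars (ps ! Suc i) \<subseteq> Fplus sig q F)))"

definition weak_attack :: "'r signature \<Rightarrow> ('r, 'v, 'c) atom set
    \<Rightarrow> (('r, 'v, 'c) atom \<times> ('r, 'v, 'c) atom) set
    \<Rightarrow> ('r, 'v, 'c) atom \<Rightarrow> ('r, 'v, 'c) atom \<Rightarrow> bool" where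
  "weak_attack sig q \<tau> F G \<longleftrightarrow> attacks sig q \<tau> F G \<and> akey sig G \<subseteq> Foplus sig q F"

definition is_cycle :: "'r signature \<Rightarrow> ('r, 'v, 'c) atom set
    \<Rightarrow> (('r, 'v, 'c) atom \<times> ('r, 'v, 'c) atom) set \<Rightarrow> ('r, 'v, 'c) atom list \<Rightarrow> bool" where
  "is_cycle sig q \<tau> cs \<longleftrightarrow> cs \<noteq> [] \<and> distinct cs
      \<and> (\<forall>i<length cs. attacks sig q \<tau> (cs ! i) (cs ! ((Suc i) mod length cs)))"

definition terminal_cycle :: "'r signature \<Rightarrow> ('r, 'v, 'c) atom set
    \<Rightarrow> (('r, 'v, 'c) atom \<times> ('r, 'v, 'c) atom) set \<Rightarrow> ('r, 'v, 'c) atom list \<Rightarrow> bool" where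
  "terminal_cycle sig q \<tau> cs \<longleftrightarrow> is_cycle sig q \<tau> cs
      \<and> (\<forall>F\<in>set cs. \<forall>G. attacks sig q \<tau> F G \<longrightarrow> G \<in> set cs)"

end

theory Submission
  imports Defs
begin


fun cw :: "('a \<times> 'a) set \<Rightarrow> 'a list \<Rightarrow> bool" where
  "cw S (x # y # ys) = ((x, y) \<in> S \<and> cw S (y # ys))"
| "cw S _ = True"

lemma cw_nth: "cw S ps \<longleftrightarrow> (\<forall>i. Suc i < length ps \<longrightarrow> (ps ! i, ps ! Suc i) \<in> S)"
proof (induction S ps rule: cw.induct)
  case (1 S x y ys)
  show ?case
  proof
    assume "cw S (x # y # ys)"
    then have a: "(x, y) \<in> S" and b: "cw S (y # ys)" by auto
    show "\<forall>i. Suc i < length (x # y # ys) \<longrightarrow> ((x # y # ys) ! i, (x # y # ys) ! Suc i) \<in> S"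
    proof (intro allI impI)
      fix i assume "Suc i < length (x # y # ys)"
      then show "((x # y # ys) ! i, (x # y # ys) ! Suc i) \<in> S"
        using a b 1 by (cases i) auto
    qed
  next
    assume H: "\<forall>i. Suc i < length (x # y # ys) \<longrightarrow> ((x # y # ys) ! i, (x # y # ys) ! Suc i) \<in> S"
    have "(x, y) \<in> S" using H[rule_format, of 0] by simp
    moreover have "cw S (y # ys)"
      unfolding 1
    proof (intro allI impI)
      fix i assume "Suc i < length (y # ys)"
      then show "((y # ys) ! i, (y # ys) ! Suc i) \<in> S" using H[rule_format, of "Suc i"] by simp
    qed
    ultimately show "cw S (x # y # ys)" by simp
  qed
qed auto

lemma cw_mono: "cw S ps \<Longrightarrow> S \<subseteq> S' \<Longrightarrow> cw S' ps"
  by (induction S ps rule: cw.induct) auto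

lemma cw_Cons_tl: "cw S (x # xs) \<Longrightarrow> cw S xs"
  by (cases xs) auto

lemma cw_suffix: "cw S (us @ vs) \<Longrightarrow> cw S vs"
  by (induction us) (auto dest: cw_Cons_tl)

lemma cw_append: "cw S xs \<Longrightarrow> cw S ys \<Longrightarrow> xs \<noteq> [] \<Longrightarrow> ys \<noteq> [] \<Longrightarrow> last xs = hd ys
   \<Longrightarrow> cw S (xs @ tl ys)"
proof (induction xs)
  case Nil thus ?case by simp
next
  case (Cons x xs)
  show ?case
  proof (cases xs)
    case Nil with Cons.prems show ?thesis by (cases ys) auto
  next
    case (Cons x' xs'') with Cons.prems Cons.IH show ?thesis by auto
  qed
qed

lemma shortcut: "cw S ws \<Longrightarrow> ws \<noteq> [] \<Longrightarrow>
   \<exists>ps. cw S ps \<and> distinct ps \<and> ps \<noteq> [] \<and> hd ps = hd ws \<and> last ps = last ws"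
proof (induction ws)
  case Nil thus ?case by simp
next
  case (Cons x ws)
  note prem = Cons.prems(1) and IH = Cons.IH
  show ?case
  proof (cases "ws = []")
    case True thus ?thesis by (intro exI[of _ "[x]"]) simp
  next
    case False
    then obtain y ys where wy: "ws = y # ys" by (cases ws) auto
    have cws: "cw S ws" using cw_Cons_tl[OF prem] .
    have xy: "(x, hd ws) \<in> S" using prem wy by simp
    obtain ps' where ps': "cw S ps'" "distinct ps'" "ps' \<noteq> []" "hd ps' = hd ws" "last ps' = last ws"
      using IH[OF cws False] by blast
    have lx: "last (x # ws) = last ws" using False by simp
    show ?thesis
    proof (cases "x \<in> set ps'")
      case True
      then obtain us vs where uv: "ps' = us @ x # vs" by (meson split_list)
      have c: "cw S (x # vs)" using cw_suffix[of S us "x # vs"] ps'(1) uv by simp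
      have d: "distinct (x # vs)" using ps'(2) uv by simp
      have l: "last (x # vs) = last ps'" using uv by simp
      show ?thesis
        by (rule exI[of _ "x # vs"]) (use c d l ps'(5) lx in simp)
    next
      case False
      have c: "cw S (x # ps')" using ps' xy by (cases ps') auto
      have l: "last (x # ps') = last ps'" using ps'(3) by simp
      show ?thesis
        by (rule exI[of _ "x # ps'"]) (use c l ps'(2,5) lx False in simp)
    qed
  qed
qed

lemma walk_in: "cw S ws \<Longrightarrow> S \<subseteq> V \<times> V \<Longrightarrow> ws \<noteq> [] \<Longrightarrow> hd ws \<in> V \<Longrightarrow> set ws \<subseteq> V"
  by (induction S ws rule: cw.induct) auto

lemma tree_path_cw: "tree_path E F G ps \<longleftrightarrow> ps \<noteq> [] \<and> hd ps = F \<and> last ps = G \<and> distinct ps \<and> cw E ps"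
  by (auto simp add: tree_path_def cw_nth)

lemma tree_unique_cw:
  assumes "is_tree V E" "cw S ws" "S \<subseteq> E" "ws \<noteq> []" "hd ws \<in> V" "last ws \<in> V"
    "tree_path E (hd ws) (last ws) ps"
  shows "cw S ps"
proof -
  obtain ps' where ps': "cw S ps'" "distinct ps'" "ps' \<noteq> []" "hd ps' = hd ws" "last ps' = last ws"
    using shortcut assms(2,4) by blast
  have "tree_path E (hd ws) (last ws) ps'"
    using ps' cw_mono[OF ps'(1) assms(3)] by (simp add: tree_path_cw)
  moreover have "\<exists>!ps. tree_path E (hd ws) (last ws) ps"
    using assms(1,5,6) unfolding is_tree_def by blast
  ultimately have "ps = ps'" using assms(7) by blast
  then show ?thesis using ps' by simp
qed



definition good :: "'r signature \<Rightarrow> ('r, 'v, 'c) atom set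
    \<Rightarrow> (('r, 'v, 'c) atom \<times> ('r, 'v, 'c) atom) set \<Rightarrow> ('r, 'v, 'c) atom
    \<Rightarrow> (('r, 'v, 'c) atom \<times> ('r, 'v, 'c) atom) set" where
  "good sig q \<tau> P = {(X, Y). (X, Y) \<in> \<tau> \<and> \<not> (avars X \<inter> avars Y \<subseteq> Fplus sig q P)}"

definition conn where
  "conn sig q \<tau> P A \<longleftrightarrow> (\<exists>ws. cw (good sig q \<tau> P) ws \<and> ws \<noteq> [] \<and> hd ws = P \<and> last ws = A)"

lemma attacks_basic: "attacks sig q \<tau> P A \<Longrightarrow> P \<in> q \<and> A \<in> q \<and> P \<noteq> A"
  unfolding attacks_def by blast

lemma FD_mem: "H \<in> Q \<Longrightarrow> (akey sig H, avars H) \<in> FD sig Q"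
  unfolding FD_def by blast

lemma FD_memD: "(L, R) \<in> FD sig Q \<Longrightarrow> \<exists>H. H \<in> Q \<and> L = akey sig H \<and> R = avars H"
  unfolding FD_def by blast

lemma akey_avars: "akey sig F \<subseteq> avars F"
  unfolding akey_def avars_def by (auto dest: in_set_takeD)

locale AG =
  fixes sig :: "'r signature" and q :: "('r, 'v, 'c) atom set"
    and \<tau> :: "(('r, 'v, 'c) atom \<times> ('r, 'v, 'c) atom) set"
  assumes jt: "join_tree q \<tau>"
    and terminal: "\<forall>cs. is_cycle sig q \<tau> cs \<longrightarrow> terminal_cycle sig q \<tau> cs"
    and cov: "\<forall>F\<in>q. \<exists>cs. is_cycle sig q \<tau> cs \<and> F \<in> set cs"
begin

lemma tree: "is_tree q \<tau>" using jt unfolding join_tree_def by (rule conjunct1)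

lemma tau_sub: "\<tau> \<subseteq> q \<times> q" using tree unfolding is_tree_def by (rule conjunct1)

lemma good_sub: "good sig q \<tau> P \<subseteq> \<tau>" unfolding good_def by (rule subsetI) (simp add: case_prod_beta)

lemma tp_ex: "F \<in> q \<Longrightarrow> G \<in> q \<Longrightarrow> \<exists>ps. tree_path \<tau> F G ps"
  using tree unfolding is_tree_def by blast

lemma attack_conn: assumes "attacks sig q \<tau> P A" shows "conn sig q \<tau> P A"
proof -
  have PA: "P \<in> q" "A \<in> q" using attacks_basic[OF assms] by auto
  obtain ps where ps: "tree_path \<tau> P A ps" using tp_ex PA by blast
  have "cw (good sig q \<tau> P) ps"
    unfolding cw_nth good_def
    using ps assms unfolding tree_path_def attacks_def by auto
  then show ?thesis unfolding conn_def using ps by (auto simp: tree_path_def)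
qed

lemma conn_in: assumes "P \<in> q" "conn sig q \<tau> P A" shows "A \<in> q"
proof -
  obtain ws where ws: "cw (good sig q \<tau> P) ws" "ws \<noteq> []" "hd ws = P" "last ws = A"
    using assms conn_def by metis
  have "set ws \<subseteq> q" using walk_in[OF ws(1) _ ws(2)] good_sub tau_sub ws(3) assms(1) by blast
  then show ?thesis using ws by auto
qed

lemma conn_attack: assumes "P \<in> q" "conn sig q \<tau> P A" "A \<noteq> P" shows "attacks sig q \<tau> P A"
proof -
  obtain ws where ws: "cw (good sig q \<tau> P) ws" "ws \<noteq> []" "hd ws = P" "last ws = A"
    using assms conn_def by metis
  have A: "A \<in> q" using conn_in assms by blast
  have "cw (good sig q \<tau> P) ps" if "tree_path \<tau> P A ps" for ps
    using tree_unique_cw[OF tree ws(1) good_sub ws(2)] ws assms A that by auto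
  then show ?thesis unfolding attacks_def using assms A
    by (auto simp: cw_nth good_def)
qed

lemma join:
  assumes "P \<in> q" "conn sig q \<tau> P A" "B \<in> q" "w \<in> avars A" "w \<in> avars B" "w \<notin> Fplus sig q P"
  shows "conn sig q \<tau> P B"
proof -
  obtain ws where ws: "cw (good sig q \<tau> P) ws" "ws \<noteq> []" "hd ws = P" "last ws = A"
    using assms conn_def by metis
  have A: "A \<in> q" using conn_in assms by blast
  obtain ps where ps: "tree_path \<tau> A B ps" using tp_ex A assms(3) by blast
  have allw: "\<forall>H\<in>set ps. w \<in> avars H" using jt ps A assms(3,4,5) unfolding join_tree_def by blast
  have cps: "cw (good sig q \<tau> P) ps"
    unfolding cw_nth good_def
  proof (intro allI impI)
    fix i assume i: "Suc i < length ps"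
    have "w \<in> avars (ps ! i)" "w \<in> avars (ps ! Suc i)" using allw i by auto
    then show "(ps ! i, ps ! Suc i) \<in> {(X, Y). (X, Y) \<in> \<tau> \<and> \<not> avars X \<inter> avars Y \<subseteq> Fplus sig q P}"
      using ps i assms(6) unfolding tree_path_def by auto
  qed
  have ps2: "ps \<noteq> []" "hd ps = A" "last ps = B" using ps by (auto simp: tree_path_def)
  have c: "cw (good sig q \<tau> P) (ws @ tl ps)" using cw_append[OF ws(1) cps ws(2) ps2(1)] ws ps2 by simp
  have l: "last (ws @ tl ps) = B"
  proof (cases "tl ps = []")
    case True
    then obtain a where "ps = [a]" using ps2(1) by (cases ps) auto
    then show ?thesis using ps2 ws True by simp
  next
    case False
    then show ?thesis using last_tl[of ps] ps2 by simp
  qed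
  show ?thesis unfolding conn_def using c l ws by (intro exI[of _ "ws @ tl ps"]) auto
qed

lemma attack_not_key:
  assumes "attacks sig q \<tau> P H"
  shows "\<not> akey sig H \<subseteq> fd_closure (FD sig (q - {P})) (akey sig P)"
proof
  assume sub: "akey sig H \<subseteq> fd_closure (FD sig (q - {P})) (akey sig P)"
  have PH: "P \<in> q" "H \<in> q" "P \<noteq> H" using attacks_basic[OF assms] by simp_all
  have fdm: "(akey sig H, avars H) \<in> FD sig (q - {P})" by (rule FD_mem) (use PH in simp)
  have "avars H \<subseteq> fd_closure (FD sig (q - {P})) (akey sig P)"
  proof
    fix y assume y: "y \<in> avars H"
    show "y \<in> fd_closure (FD sig (q - {P})) (akey sig P)"
      by (rule fd_closure.step[OF fdm _ y]) (use sub in blast)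
  qed
  moreover have "avars H \<subseteq> qvars q" using PH unfolding qvars_def by blast
  ultimately have vh: "avars H \<subseteq> Fplus sig q P" unfolding Fplus_def fd_entails_def by auto
  obtain ps where ps: "tree_path \<tau> P H ps" using tp_ex PH by blast
  have ne: "ps \<noteq> []" "hd ps = P" "last ps = H" using ps by (auto simp: tree_path_def)
  have len: "length ps \<ge> 2"
  proof (rule ccontr)
    assume "\<not> ?thesis"
    then obtain a where "ps = [a]" using ne by (cases ps; cases "tl ps") auto
    then show False using ne PH by simp
  qed
  define i where "i = length ps - 2"
  have i: "Suc i < length ps" using len i_def by simp
  have "Suc i = length ps - 1" using len i_def by simp
  then have "ps ! Suc i = H" using ne last_conv_nth[of ps] by simp
  then have "\<not> (avars (ps ! i) \<inter> avars H \<subseteq> Fplus sig q P)"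
    using assms ps i unfolding attacks_def by blast
  then show False using vh by auto
qed

end


context AG begin

lemma cyc_at: "is_cycle sig q \<tau> cs \<Longrightarrow> k < length cs \<Longrightarrow> attacks sig q \<tau> (cs ! k) (cs ! (Suc k mod length cs))"
  unfolding is_cycle_def by blast

lemma cyc_term: "is_cycle sig q \<tau> cs \<Longrightarrow> F \<in> set cs \<Longrightarrow> attacks sig q \<tau> F G \<Longrightarrow> G \<in> set cs"
proof -
  assume c: "is_cycle sig q \<tau> cs" and F: "F \<in> set cs" and a: "attacks sig q \<tau> F G"
  have "terminal_cycle sig q \<tau> cs" using terminal c by blast
  then have "\<forall>F\<in>set cs. \<forall>G. attacks sig q \<tau> F G \<longrightarrow> G \<in> set cs" unfolding terminal_cycle_def by (rule conjunct2)
  then show "G \<in> set cs" using F a by blast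
qed

lemma cyc_in_q: assumes c: "is_cycle sig q \<tau> cs" shows "set cs \<subseteq> q"
proof
  fix F assume "F \<in> set cs"
  then obtain k where k: "k < length cs" "F = cs ! k" by (auto simp: in_set_conv_nth)
  show "F \<in> q" using attacks_basic[OF cyc_at[OF c k(1)]] k(2) by simp
qed

lemma cycle_rot: assumes c: "is_cycle sig q \<tau> cs" shows "is_cycle sig q \<tau> (rotate i cs)"
proof -
  let ?n = "length cs"
  have ne: "cs \<noteq> []" "distinct cs" using c unfolding is_cycle_def by simp_all
  have n0: "0 < ?n" using ne by simp
  have "attacks sig q \<tau> (rotate i cs ! k) (rotate i cs ! (Suc k mod ?n))" if k: "k < ?n" for k
  proof -
    have r1: "rotate i cs ! k = cs ! ((i + k) mod ?n)" using nth_rotate[OF k] .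
    have sk: "Suc k mod ?n < ?n" using n0 by simp
    have r2: "rotate i cs ! (Suc k mod ?n) = cs ! ((i + Suc k mod ?n) mod ?n)" using nth_rotate[OF sk] .
    have e: "(i + Suc k mod ?n) mod ?n = Suc ((i + k) mod ?n) mod ?n"
      by (metis add_Suc_right mod_add_right_eq mod_Suc_eq)
    have "(i + k) mod ?n < ?n" using n0 by simp
    from cyc_at[OF c this] show ?thesis using r1 r2 e by simp
  qed
  then show ?thesis unfolding is_cycle_def using ne by simp
qed

lemma cycle_succ:
  assumes cyc: "is_cycle sig q \<tau> rs" and att: "attacks sig q \<tau> (rs ! 0) H"
  shows "H = rs ! (1 mod length rs)"
proof -
  let ?n = "length rs"
  have ne: "rs \<noteq> []" "distinct rs" using cyc unfolding is_cycle_def by simp_all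
  have "rs ! 0 \<in> set rs" using ne by simp
  then have "H \<in> set rs" using cyc_term[OF cyc _ att] by simp
  then obtain j where j: "j < ?n" "H = rs ! j" by (auto simp: in_set_conv_nth)
  have "rs ! 0 \<noteq> H" using attacks_basic[OF att] by simp
  then have j0: "j \<noteq> 0" using j by (metis)
  show ?thesis
  proof (cases "j = 1")
    case True then show ?thesis using j by simp
  next
    case False
    hence j2: "2 \<le> j" using j0 by simp
    define ds where "ds = rs ! 0 # drop j rs"
    have lds: "length ds = ?n - j + 1" unfolding ds_def using j by simp
    have dsk: "ds ! k = rs ! (j + k - 1)" if k0: "0 < k" and kl: "k < length ds" for k
    proof -
      obtain k' where k': "k = Suc k'" using k0 by (cases k) simp_all
      have "ds ! k = drop j rs ! k'" unfolding ds_def k' by simp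
      also have "\<dots> = rs ! (j + k')" using j by simp
      finally show ?thesis using k' by simp
    qed
    have ds0: "ds ! 0 = rs ! 0" unfolding ds_def by simp
    have notin: "rs ! m \<notin> set (drop j rs)" if "m < j" for m
    proof
      assume "rs ! m \<in> set (drop j rs)"
      then obtain k where k: "k < length (drop j rs)" "rs ! m = drop j rs ! k" by (auto simp: in_set_conv_nth)
      have "drop j rs ! k = rs ! (j + k)" using j by simp
      moreover have "j + k < ?n" using k(1) by simp
      ultimately have "m = j + k" using k(2) ne(2) that j nth_eq_iff_index_eq by (metis less_trans)
      then show False using that by simp
    qed
    have dd: "distinct ds" unfolding ds_def using ne(2) notin[of 0] j0 by simp
    have "attacks sig q \<tau> (ds ! k) (ds ! (Suc k mod length ds))" if k: "k < length ds" for k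
    proof (cases "k = 0")
      case True
      have "Suc 0 mod length ds = 1" using lds j by simp
      moreover have "ds ! 1 = rs ! j" using dsk[of 1] lds j by simp
      ultimately show ?thesis using True ds0 att j by simp
    next
      case False
      show ?thesis
      proof (cases "Suc k < length ds")
        case True
        have m: "Suc k mod length ds = Suc k" using True by simp
        have a: "ds ! k = rs ! (j + k - 1)" using dsk False k by simp
        have b: "ds ! Suc k = rs ! (j + k)" using dsk[of "Suc k"] True by simp
        have jk: "j + k - 1 < ?n" "Suc (j + k - 1) mod ?n = j + k" using True lds False by auto
        show ?thesis using cyc_at[OF cyc jk(1)] jk(2) a b m by simp
      next
        case False2: False
        have kl: "Suc k = length ds" using k False2 by simp
        have m: "Suc k mod length ds = 0" using kl by simp
        have a: "ds ! k = rs ! (?n - 1)" using dsk[of k] False k kl lds j by simp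
        have sn: "Suc (?n - 1) = ?n" using j by simp
        have nn: "?n - 1 < ?n" "Suc (?n - 1) mod ?n = 0" using j by (simp, subst sn, simp)
        show ?thesis using cyc_at[OF cyc nn(1)] nn(2) a m ds0 by simp
      qed
    qed
    then have cd: "is_cycle sig q \<tau> ds" unfolding is_cycle_def using dd ds_def by simp
    have n2: "1 < ?n" "Suc 0 mod ?n = 1" using j j2 by auto
    have "attacks sig q \<tau> (rs ! 0) (rs ! 1)" using cyc_at[OF cyc, of 0] n2 ne(1) by simp
    moreover have "rs ! 0 \<in> set ds" unfolding ds_def by simp
    ultimately have "rs ! 1 \<in> set ds" using cyc_term[OF cd] by blast
    moreover have "rs ! 1 \<noteq> rs ! 0" using ne(2) n2 nth_eq_iff_index_eq by fastforce
    ultimately have "rs ! 1 \<in> set (drop j rs)" unfolding ds_def by simp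
    then show ?thesis using notin[of 1] j2 by simp
  qed
qed

lemma U: assumes a1: "attacks sig q \<tau> F H1" and a2: "attacks sig q \<tau> F H2" shows "H1 = H2"
proof -
  have F: "F \<in> q" using attacks_basic[OF a1] by simp
  obtain cs where cs: "is_cycle sig q \<tau> cs" "F \<in> set cs" using cov F by blast
  obtain i where i: "i < length cs" "cs ! i = F" using cs(2) by (auto simp: in_set_conv_nth)
  define rs where "rs = rotate i cs"
  have rc: "is_cycle sig q \<tau> rs" unfolding rs_def by (rule cycle_rot[OF cs(1)])
  have "0 < length cs" using i(1) by (cases cs) auto
  then have "rs ! 0 = cs ! ((i + 0) mod length cs)" unfolding rs_def by (rule nth_rotate)
  then have r0: "rs ! 0 = F" using i by simp
  show ?thesis using cycle_succ[OF rc] a1 a2 r0 by metis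
qed

lemma has_attacker: assumes H: "H \<in> q" shows "\<exists>P. attacks sig q \<tau> P H"
proof -
  obtain cs where cs: "is_cycle sig q \<tau> cs" "H \<in> set cs" using cov H by blast
  obtain i where i: "i < length cs" "cs ! i = H" using cs(2) by (auto simp: in_set_conv_nth)
  define p where "p = (if i = 0 then length cs - 1 else i - 1)"
  have p: "p < length cs" "Suc p mod length cs = i" using i unfolding p_def by auto
  show ?thesis by (rule exI[of _ "cs ! p"]) (use cyc_at[OF cs(1) p(1)] p(2) i(2) in simp)
qed

lemma cyc_sub:
  assumes c1: "is_cycle sig q \<tau> cs1" and c2: "is_cycle sig q \<tau> cs2"
    and V1: "V \<in> set cs1" and V2: "V \<in> set cs2"
  shows "set cs2 \<subseteq> set cs1"
proof -
  let ?n = "length cs2"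
  obtain i where i: "i < ?n" "cs2 ! i = V" using V2 by (auto simp: in_set_conv_nth)
  have n0: "0 < ?n" using i(1) by (cases cs2) auto
  have all: "cs2 ! ((i + k) mod ?n) \<in> set cs1" for k
  proof (induction k)
    case 0 then show ?case using i V1 by simp
  next
    case (Suc k)
    have a: "(i + k) mod ?n < ?n" using n0 by simp
    have "Suc ((i + k) mod ?n) mod ?n = (i + Suc k) mod ?n" by (simp add: mod_Suc_eq)
    then show ?case using cyc_term[OF c1 Suc.IH cyc_at[OF c2 a]] by simp
  qed
  show ?thesis
  proof
    fix x assume "x \<in> set cs2"
    then obtain j where j: "j < ?n" "x = cs2 ! j" by (auto simp: in_set_conv_nth)
    have "(i + (j + ?n - i)) mod ?n = j" using i j by simp
    then show "x \<in> set cs1" using all[of "j + ?n - i"] j by simp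
  qed
qed

lemma plus_key: assumes F: "F \<in> q"
  shows "fd_closure (FD sig (q - {F})) (akey sig F) \<subseteq> akey sig F"
proof
  fix y assume "y \<in> fd_closure (FD sig (q - {F})) (akey sig F)"
  then show "y \<in> akey sig F"
  proof (induction rule: fd_closure.induct)
    case (base x) thus ?case .
  next
    case (step L R y)
    obtain H where H: "H \<in> q - {F}" "L = akey sig H" "R = avars H" using FD_memD[OF step.hyps(1)] by blast
    have sub: "akey sig H \<subseteq> akey sig F" using step.IH H(2) by blast
    have Hq: "H \<in> q" using H(1) by simp
    obtain P where P: "attacks sig q \<tau> P H" using has_attacker[OF Hq] by blast
    have Pq: "P \<in> q" using attacks_basic[OF P] by simp
    have contra: False
    proof (cases "P = F")
      case True
      have "akey sig H \<subseteq> fd_closure (FD sig (q - {F})) (akey sig F)"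
        using sub fd_closure.base by (metis subset_iff)
      then show False using attack_not_key[OF P] True by simp
    next
      case False
      obtain z where z: "z \<in> akey sig H" "z \<notin> fd_closure (FD sig (q - {P})) (akey sig P)"
        using attack_not_key[OF P] by blast
      have zP: "z \<notin> Fplus sig q P" using z(2) unfolding Fplus_def fd_entails_def by simp
      have zH: "z \<in> avars H" using subsetD[OF akey_avars z(1)] .
      have zF: "z \<in> avars F" using subsetD[OF akey_avars subsetD[OF sub z(1)]] .
      have "conn sig q \<tau> P F" by (rule join[OF Pq attack_conn[OF P] F zH zF zP])
      then have "attacks sig q \<tau> P F" using conn_attack[OF Pq] False by simp
      then have "H = F" using U[OF P] by simp
      then show False using H(1) by simp
    qed
    then show ?case ..
  qed
qed

lemma Fplus_key: "F \<in> q \<Longrightarrow> Fplus sig q F \<subseteq> akey sig F"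
  using plus_key unfolding Fplus_def fd_entails_def by blast

lemma part1:
  assumes c1: "is_cycle sig q \<tau> cs1" and c2: "is_cycle sig q \<tau> cs2" and ne: "set cs1 \<noteq> set cs2"
    and F1: "F1 \<in> set cs1" and F2: "F2 \<in> set cs2" and x1: "x \<in> avars F1" and x2: "x \<in> avars F2"
    and F: "F \<in> set cs1"
  shows "x \<in> akey sig F"
proof -
  let ?n = "length cs1"
  have disj: "F2 \<notin> set cs1"
  proof
    assume "F2 \<in> set cs1"
    then have "set cs2 \<subseteq> set cs1" "set cs1 \<subseteq> set cs2"
      using cyc_sub[OF c1 c2 _ F2] cyc_sub[OF c2 c1 F2] by auto
    then show False using ne by simp
  qed
  have F2q: "F2 \<in> q" using cyc_in_q[OF c2] F2 by blast
  have step: "x \<in> akey sig (cs1 ! j)" if j: "j < ?n" and xa: "x \<in> avars (cs1 ! (Suc j mod ?n))" for j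
  proof (rule ccontr)
    assume nx: "x \<notin> akey sig (cs1 ! j)"
    have att: "attacks sig q \<tau> (cs1 ! j) (cs1 ! (Suc j mod ?n))" using cyc_at[OF c1 j] .
    have Eq: "cs1 ! j \<in> q" using attacks_basic[OF att] by simp
    have "x \<notin> Fplus sig q (cs1 ! j)" using Fplus_key[OF Eq] nx by blast
    then have "conn sig q \<tau> (cs1 ! j) F2" by (rule join[OF Eq attack_conn[OF att] F2q xa x2])
    moreover have "F2 \<noteq> cs1 ! j" using disj j nth_mem by metis
    ultimately have "attacks sig q \<tau> (cs1 ! j) F2" using conn_attack[OF Eq] by simp
    then have "F2 \<in> set cs1" using cyc_term[OF c1 nth_mem[OF j]] by simp
    then show False using disj by simp
  qed
  define Q where "Q j \<longleftrightarrow> x \<in> avars (cs1 ! j)" for j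
  have Qdown: "Q j" if "j < ?n" "Q (Suc j mod ?n)" for j
    using subsetD[OF akey_avars step[OF that(1)]] that(2) unfolding Q_def by simp
  obtain i where i: "i < ?n" "cs1 ! i = F1" using F1 by (auto simp: in_set_conv_nth)
  have Qi: "Q i" using i x1 Q_def by simp
  have phase1: "Q j" if "j \<le> i" for j
  proof (rule inc_induct[OF that])
    show "Q i" by (rule Qi)
  next
    fix m assume "j \<le> m" "m < i" "Q (Suc m)"
    then show "Q m" using Qdown[of m] i by simp
  qed
  have n0: "0 < ?n" using i(1) by (cases cs1) auto
  have Q0: "Q 0" using phase1 by simp
  have Qlast: "Q (?n - 1)" using Qdown[of "?n - 1"] Q0 n0 by simp
  have all: "Q j" if "j < ?n" for j
  proof (rule inc_induct[of j "?n - 1"])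
    show "j \<le> ?n - 1" using that by simp
    show "Q (?n - 1)" by (rule Qlast)
  next
    fix m assume "j \<le> m" "m < ?n - 1" "Q (Suc m)"
    then show "Q m" using Qdown[of m] by simp
  qed
  obtain k where k: "k < ?n" "cs1 ! k = F" using F by (auto simp: in_set_conv_nth)
  have "Suc k mod ?n < ?n" using n0 by simp
  then have "Q (Suc k mod ?n)" by (rule all)
  then show ?thesis using step[OF k(1)] k(2) Q_def by simp
qed

lemma part2_aux:
  assumes F: "F \<in> q" and y: "y \<in> fd_closure (FD sig q) (akey sig F)"
  shows "\<forall>A. conn sig q \<tau> F A \<longrightarrow> y \<in> akey sig A \<longrightarrow> y \<in> avars F"
  using y
proof (induction rule: fd_closure.induct)
  case (base y) show ?case using subsetD[OF akey_avars base] by blast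
next
  case (step L R y)
  obtain H where H: "H \<in> q" "L = akey sig H" "R = avars H" using FD_memD[OF step.hyps(1)] by blast
  show ?case
  proof (intro allI impI)
    fix A assume cA: "conn sig q \<tau> F A" and yA: "y \<in> akey sig A"
    show "y \<in> avars F"
    proof (rule ccontr)
      assume ny: "y \<notin> avars F"
      have AF: "A \<noteq> F" using ny subsetD[OF akey_avars yA] by blast
      have attA: "attacks sig q \<tau> F A" using conn_attack[OF F cA AF] .
      have yP: "y \<notin> Fplus sig q F" using subset_trans[OF Fplus_key[OF F] akey_avars] ny by blast
      have yH: "y \<in> avars H" using step.hyps(2) H(3) by simp
      have yA': "y \<in> avars A" using subsetD[OF akey_avars yA] .
      have cH: "conn sig q \<tau> F H" by (rule join[OF F cA H(1) yA' yH yP])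
      have HF: "H \<noteq> F" using yH ny by blast
      have "attacks sig q \<tau> F H" using conn_attack[OF F cH HF] .
      then have HA: "H = A" using U attA by blast
      have "y \<in> L" using H(2) HA yA by simp
      then have "\<forall>A. conn sig q \<tau> F A \<longrightarrow> y \<in> akey sig A \<longrightarrow> y \<in> avars F" using step.IH by blast
      then show False using cA yA ny by blast
    qed
  qed
qed

lemma part2: assumes w: "weak_attack sig q \<tau> F G" shows "akey sig G \<subseteq> avars F"
proof
  fix y assume y: "y \<in> akey sig G"
  have att: "attacks sig q \<tau> F G" and sub: "akey sig G \<subseteq> Foplus sig q F"
    using w unfolding weak_attack_def by simp_all
  have F: "F \<in> q" using attacks_basic[OF att] by simp
  have "y \<in> fd_closure (FD sig q) (akey sig F)" using sub y unfolding Foplus_def fd_entails_def by blast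
  from part2_aux[OF F this] show "y \<in> avars F" using attack_conn[OF att] y by blast
qed

end


theorem lemma7:
  fixes sig :: "'r signature"
    and q :: "('r, 'v, 'c) atom set"
    and \<tau> :: "(('r, 'v, 'c) atom \<times> ('r, 'v, 'c) atom) set"
  assumes wf: "wf_query sig q"
    and jt: "join_tree q \<tau>"
    and terminal: "\<forall>cs. is_cycle sig q \<tau> cs \<longrightarrow> terminal_cycle sig q \<tau> cs"
    and cov: "\<forall>F\<in>q. \<exists>cs. is_cycle sig q \<tau> cs \<and> F \<in> set cs"
  shows "(\<forall>cs1 cs2 F1 F2 x.
            is_cycle sig q \<tau> cs1 \<and> is_cycle sig q \<tau> cs2 \<and> set cs1 \<noteq> set cs2
            \<and> F1 \<in> set cs1 \<and> F2 \<in> set cs2 \<and> x \<in> avars F1 \<and> x \<in> avars F2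
            \<longrightarrow> (\<forall>F \<in> set cs1 \<union> set cs2. x \<in> akey sig F))
       \<and> (\<forall>F G. weak_attack sig q \<tau> F G \<longrightarrow> akey sig G \<subseteq> avars F)"
proof -
  interpret AG sig q \<tau> by (rule AG.intro[OF jt terminal cov])
  have P1: "\<forall>cs1 cs2 F1 F2 x.
            is_cycle sig q \<tau> cs1 \<and> is_cycle sig q \<tau> cs2 \<and> set cs1 \<noteq> set cs2
            \<and> F1 \<in> set cs1 \<and> F2 \<in> set cs2 \<and> x \<in> avars F1 \<and> x \<in> avars F2
            \<longrightarrow> (\<forall>F \<in> set cs1 \<union> set cs2. x \<in> akey sig F)"
  proof (intro allI impI)
    fix cs1 cs2 F1 F2 x
    assume h: "is_cycle sig q \<tau> cs1 \<and> is_cycle sig q \<tau> cs2 \<and> set cs1 \<noteq> set cs2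
            \<and> F1 \<in> set cs1 \<and> F2 \<in> set cs2 \<and> x \<in> avars F1 \<and> x \<in> avars F2"
    then have c1: "is_cycle sig q \<tau> cs1" and c2: "is_cycle sig q \<tau> cs2" and ne: "set cs1 \<noteq> set cs2"
      and f1: "F1 \<in> set cs1" and f2: "F2 \<in> set cs2" and x1: "x \<in> avars F1" and x2: "x \<in> avars F2"
      by simp_all
    have ne': "set cs2 \<noteq> set cs1" using ne by simp
    show "\<forall>F \<in> set cs1 \<union> set cs2. x \<in> akey sig F"
    proof
      fix F assume "F \<in> set cs1 \<union> set cs2"
      then show "x \<in> akey sig F"
      proof
        assume "F \<in> set cs1"
        then show ?thesis by (rule part1[OF c1 c2 ne f1 f2 x1 x2])
      next
        assume "F \<in> set cs2"
        then show ?thesis by (rule part1[OF c2 c1 ne' f2 f1 x2 x1])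
      qed
    qed
  qed
  have P2: "\<forall>F G. weak_attack sig q \<tau> F G \<longrightarrow> akey sig G \<subseteq> avars F"
  proof (intro allI impI)
    fix F G assume "weak_attack sig q \<tau> F G"
    then show "akey sig G \<subseteq> avars F" by (rule part2)
  qed
  show ?thesis using P1 P2 by (rule conjI)
qed

end
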